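(* In the setting of the addition algorithm, for every $\varphi\in\mathbb{R}^V$ with $M(\varphi)\le L(\tau,\varepsilon)$ we have $$\tau(v)-\tau'(v,r(\varphi,v))\le T^+(\varphi)_v-\varphi_v\le\tau(v)\quad\text{for all }v\in V.$$ Consequently (Corollary 2.4), for such $\varphi$, $\tau(v)-\varepsilon/2\le T^+(\varphi)_v-\varphi_v=\varphi_v-T^-(\varphi)_v\le\tau(v)$ for all $v\in V$.
   Context: Addition algorithm. Let $G=(V,E)$ be a finite connected graph ($v\sim w$ means $(v,w)\in E$), $\tau:V\to[0,\infty)$, $0<\varepsilon\le1/2$, and fix a total order $\preceq$ on $V$. Let $f:\mathbb{R}\to\mathbb{R}$ be $f(x)=0$ for $|x|\ge1$, $f(x)=(1+x)/\varepsilon$ on $[-1,-1+\varepsilon]$, $f(x)=1$ on $[-1+\varepsilon,1-\varepsilon]$, $f(x)=(1-x)/\varepsilon$ on $[1-\varepsilon,1]$. For $v\in V$, $h,t\in\mathbb{R}$ let $m_{v,h,t}(h')=\min(\tau(v)-t,\varepsilon/2)f(h'-h)+t$ if $\tau(v)\ge t$, and $m_{v,h,t}(h')=t$ if $\tau(v)<t$. On input $\varphi\in\mathbb{R}^V$ the algorithm outputs an ordering $P_1,\dots,P_{|V|}$ of $V$, numbers $s_k$ and functions $\tau_k:V\times\mathbb{R}\to\mathbb{R}$: set $\tau_1(v,h)=\tau(v)$; for $k=1,\dots,|V|$: let $P_k$ be the vertex $v\in V\setminus\{P_1,\dots,P_{k-1}\}$ minimizing $\tau_k(v,\varphi_v)$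 (ties broken by taking the $\preceq$-smallest); set $s_k=\tau_k(P_k,\varphi_{P_k})$; if $k<|V|$ set $\tau_{k+1}(v,h)=\tau_k(v,h)$ if $v\in\{P_1,\dots,P_k\}$ or $v\not\sim P_k$, and $\tau_{k+1}(v,h)=\min(\tau_k(v,h),m_{v,\varphi_{P_k},s_k}(h))$ otherwise. Define $T^+(\varphi)_{P_k}=\varphi_{P_k}+s_k$ ($1\le k\le|V|$) and $T^-(\varphi)=2\varphi-T^+(\varphi)$. Further notation: $d_G$ is graph distance; $\tau'(v,k):=\max\{\tau(v)-\tau(w):w\in V,\ d_G(v,w)\le k\}$ for integers $k\ge0$; $L(\tau,\varepsilon):=\sup\{k\ge0 \text{ integer}:\tau'(v,k)\le\varepsilon/2\ \forall v\in V\}-1$ (possibly $+\infty$). $\mathcal{E}(\varphi):=\{(v,w)\in E:|\varphi_v-\varphi_w|\ge1-\varepsilon\}$; $v\leftrightarrow w$ if $v$ and $w$ are connected by a path of edges of $\mathcal{E}(\varphi)$ (including $v=w$); $r(\varphi,v):=\max\{d_G(v,w):v\leftrightarrow w\}$ and $M(\varphi):=\max\{d_G(v,w):v\leftrightarrow w\}$ over all pairs. *)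

theory Defs
  imports Complex_Main "HOL-Library.Extended_Real"
begin

definition edge_rel :: "('a \<Rightarrow> 'a \<Rightarrow> bool) \<Rightarrow> ('a \<times> 'a) set" where
  "edge_rel E = {(x, y). E x y}"

definition finite_connected_graph :: "'a set \<Rightarrow> ('a \<Rightarrow> 'a \<Rightarrow> bool) \<Rightarrow> bool" where
  "finite_connected_graph V E \<longleftrightarrow> finite V \<and> V \<noteq> {} \<and>
     (\<forall>x y. E x y \<longrightarrow> x \<in> V \<and> y \<in> V) \<and>
     (\<forall>x y. E x y \<longrightarrow> E y x) \<and> (\<forall>x. \<not> E x x) \<and>
     (\<forall>x\<in>V. \<forall>y\<in>V. (x, y) \<in> (edge_rel E)\<^sup>*)"

definition gdist :: "('a \<Rightarrow> 'a \<Rightarrow> bool) \<Rightarrow> 'a \<Rightarrow> 'a \<Rightarrow> nat" where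
  "gdist E v w = (LEAST n. (v, w) \<in> edge_rel E ^^ n)"

definition total_order_on :: "'a set \<Rightarrow> ('a \<Rightarrow> 'a \<Rightarrow> bool) \<Rightarrow> bool" where
  "total_order_on V le \<longleftrightarrow>
     (\<forall>x\<in>V. le x x) \<and>
     (\<forall>x\<in>V. \<forall>y\<in>V. le x y \<and> le y x \<longrightarrow> x = y) \<and>
     (\<forall>x\<in>V. \<forall>y\<in>V. \<forall>z\<in>V. le x y \<and> le y z \<longrightarrow> le x z) \<and>
     (\<forall>x\<in>V. \<forall>y\<in>V. le x y \<or> le y x)"

definition ffun :: "real \<Rightarrow> real \<Rightarrow> real" where
  "ffun eps x =
     (if \<bar>x\<bar> \<ge> 1 then 0
      else if x \<le> -1 + eps then (1 + x) / eps
      else if x \<le> 1 - eps then 1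
      else (1 - x) / eps)"

definition mfun :: "('a \<Rightarrow> real) \<Rightarrow> real \<Rightarrow> 'a \<Rightarrow> real \<Rightarrow> real \<Rightarrow> real \<Rightarrow> real" where
  "mfun tau eps v h t h' =
     (if tau v \<ge> t then min (tau v - t) (eps / 2) * ffun eps (h' - h) + t else t)"

definition argsel :: "('a \<Rightarrow> 'a \<Rightarrow> bool) \<Rightarrow> 'a set \<Rightarrow> ('a \<Rightarrow> real) \<Rightarrow> 'a" where
  "argsel le R g = (THE v. v \<in> R \<and> (\<forall>w\<in>R. g v \<le> g w) \<and>
                          (\<forall>w\<in>R. g w = g v \<longrightarrow> le v w))"

text \<open>State after k steps: ([P_1..P_k], tau_{k+1}, [s_1..s_k]).\<close>
primrec addalg :: "'a set \<Rightarrow> ('a \<Rightarrow> 'a \<Rightarrow> bool) \<Rightarrow> ('a \<Rightarrow> 'a \<Rightarrow> bool) \<Rightarrow> ('a \<Rightarrow> real) \<Rightarrow> real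
     \<Rightarrow> ('a \<Rightarrow> real) \<Rightarrow> nat \<Rightarrow> 'a list \<times> ('a \<Rightarrow> real \<Rightarrow> real) \<times> real list" where
  "addalg V E le tau eps phi 0 = ([], (\<lambda>v h. tau v), [])"
| "addalg V E le tau eps phi (Suc k) =
     (case addalg V E le tau eps phi k of (Ps, tk, ss) \<Rightarrow>
       (let p = argsel le (V - set Ps) (\<lambda>v. tk v (phi v));
            s = tk p (phi p);
            Ps' = Ps @ [p]
        in (Ps',
            (\<lambda>v h. if v \<in> set Ps' \<or> \<not> E v p then tk v h
                   else min (tk v h) (mfun tau eps v (phi p) s h)),
            ss @ [s])))"

definition Tplus :: "'a set \<Rightarrow> ('a \<Rightarrow> 'a \<Rightarrow> bool) \<Rightarrow> ('a \<Rightarrow> 'a \<Rightarrow> bool) \<Rightarrow> ('a \<Rightarrow> real) \<Rightarrow> real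
     \<Rightarrow> ('a \<Rightarrow> real) \<Rightarrow> 'a \<Rightarrow> real" where
  "Tplus V E le tau eps phi v =
     (case addalg V E le tau eps phi (card V) of (Ps, _, ss) \<Rightarrow>
        phi v + the (map_of (zip Ps ss) v))"

definition Tminus :: "'a set \<Rightarrow> ('a \<Rightarrow> 'a \<Rightarrow> bool) \<Rightarrow> ('a \<Rightarrow> 'a \<Rightarrow> bool) \<Rightarrow> ('a \<Rightarrow> real) \<Rightarrow> real
     \<Rightarrow> ('a \<Rightarrow> real) \<Rightarrow> 'a \<Rightarrow> real" where
  "Tminus V E le tau eps phi v = 2 * phi v - Tplus V E le tau eps phi v"

definition tau' :: "'a set \<Rightarrow> ('a \<Rightarrow> 'a \<Rightarrow> bool) \<Rightarrow> ('a \<Rightarrow> real) \<Rightarrow> 'a \<Rightarrow> nat \<Rightarrow> real" where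
  "tau' V E tau v k = Max {tau v - tau w | w. w \<in> V \<and> gdist E v w \<le> k}"

definition Lbound :: "'a set \<Rightarrow> ('a \<Rightarrow> 'a \<Rightarrow> bool) \<Rightarrow> ('a \<Rightarrow> real) \<Rightarrow> real \<Rightarrow> ereal" where
  "Lbound V E tau eps =
     (SUP k\<in>{k::nat. \<forall>v\<in>V. tau' V E tau v k \<le> eps / 2}. ereal (real k)) - 1"

definition steep_edges :: "('a \<Rightarrow> 'a \<Rightarrow> bool) \<Rightarrow> real \<Rightarrow> ('a \<Rightarrow> real) \<Rightarrow> ('a \<times> 'a) set" where
  "steep_edges E eps phi = {(v, w). E v w \<and> \<bar>phi v - phi w\<bar> \<ge> 1 - eps}"

definition conn :: "('a \<Rightarrow> 'a \<Rightarrow> bool) \<Rightarrow> real \<Rightarrow> ('a \<Rightarrow> real) \<Rightarrow> 'a \<Rightarrow> 'a \<Rightarrow> bool" where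
  "conn E eps phi v w \<longleftrightarrow> (v, w) \<in> (steep_edges E eps phi)\<^sup>*"

definition rfun :: "'a set \<Rightarrow> ('a \<Rightarrow> 'a \<Rightarrow> bool) \<Rightarrow> real \<Rightarrow> ('a \<Rightarrow> real) \<Rightarrow> 'a \<Rightarrow> nat" where
  "rfun V E eps phi v = Max {gdist E v w | w. w \<in> V \<and> conn E eps phi v w}"

definition Mfun :: "'a set \<Rightarrow> ('a \<Rightarrow> 'a \<Rightarrow> bool) \<Rightarrow> real \<Rightarrow> ('a \<Rightarrow> real) \<Rightarrow> nat" where
  "Mfun V E eps phi = Max {gdist E v w | v w. v \<in> V \<and> w \<in> V \<and> conn E eps phi v w}"

end

theory Submission
  imports Defs
begin

lemma least_exists:
  assumes "total_order_on V le" "finite S" "S \<noteq> {}" "S \<subseteq> V"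
  shows "\<exists>x\<in>S. \<forall>y\<in>S. le x y"
  using assms(2,3,4)
proof (induction S rule: finite_ne_induct)
  case (singleton x)
  then show ?case using assms(1) unfolding total_order_on_def by auto
next
  case (insert x F)
  then obtain y where y: "y \<in> F" "\<forall>z\<in>F. le y z" by auto
  show ?case
  proof (cases "le x y")
    case True
    then show ?thesis using y insert.prems assms(1) unfolding total_order_on_def
      by (metis insert_iff insert_subset subsetD)
  next
    case False
    then have "le y x" using y insert.prems assms(1) unfolding total_order_on_def
      by (metis insert_subset subsetD)
    then show ?thesis using y by auto
  qed
qed

lemma argsel_in:
  assumes tot: "total_order_on V le" and fin: "finite R" and ne: "R \<noteq> {}" and sub: "R \<subseteq> V"
  shows "argsel le R g \<in> R"
proof -
  define m where "m = Min (g ` R)"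
  define S where "S = {v\<in>R. g v = m}"
  have "m \<in> g ` R" unfolding m_def using fin ne by auto
  then have Sne: "S \<noteq> {}" unfolding S_def by auto
  have "finite S" using fin unfolding S_def by auto
  then obtain x where x: "x \<in> S" "\<forall>y\<in>S. le x y"
    using least_exists[OF tot _ Sne] sub unfolding S_def by blast
  let ?P = "\<lambda>v. v \<in> R \<and> (\<forall>w\<in>R. g v \<le> g w) \<and> (\<forall>w\<in>R. g w = g v \<longrightarrow> le v w)"
  have Px: "?P x" using x fin unfolding S_def m_def by auto
  have uniq: "v = x" if "?P v" for v
  proof -
    have "g v = g x" using that Px by (meson order_antisym)
    then have "le v x" "le x v" using that Px by auto
    moreover have "v \<in> V" "x \<in> V" using that Px sub by auto
    ultimately show ?thesis using tot unfolding total_order_on_def by metis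
  qed
  have "?P (THE v. ?P v)" by (rule theI[of ?P x, OF Px uniq])
  then show ?thesis unfolding argsel_def by blast
qed

definition mu :: "'a set \<Rightarrow> ('a \<Rightarrow> 'a \<Rightarrow> bool) \<Rightarrow> real \<Rightarrow> ('a \<Rightarrow> real) \<Rightarrow> ('a \<Rightarrow> real) \<Rightarrow> 'a \<Rightarrow> real" where
  "mu V E eps phi tau v = Min (tau ` {w\<in>V. conn E eps phi v w})"

lemma mu_props:
  assumes "finite V" "v \<in> V"
  shows "mu V E eps phi tau v \<le> tau v"
    and "\<exists>w\<in>V. conn E eps phi v w \<and> mu V E eps phi tau v = tau w"
proof -
  have fin: "finite {w\<in>V. conn E eps phi v w}" using assms by auto
  have vin: "v \<in> {w\<in>V. conn E eps phi v w}" using assms by (auto simp: conn_def)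
  show "mu V E eps phi tau v \<le> tau v" unfolding mu_def using fin vin by auto
  have "Min (tau ` {w\<in>V. conn E eps phi v w}) \<in> tau ` {w\<in>V. conn E eps phi v w}"
    using fin vin by (intro Min_in) auto
  then show "\<exists>w\<in>V. conn E eps phi v w \<and> mu V E eps phi tau v = tau w"
    unfolding mu_def by auto
qed

lemma mu_steep:
  assumes "finite V" "v \<in> V" "p \<in> V" "(v, p) \<in> steep_edges E eps phi"
  shows "mu V E eps phi tau v \<le> mu V E eps phi tau p"
proof -
  obtain w where w: "w \<in> V" "conn E eps phi p w" "mu V E eps phi tau p = tau w"
    using mu_props(2)[OF assms(1,3)] by blast
  have "conn E eps phi v w" using w(2) assms(4) unfolding conn_def
    by (meson converse_rtrancl_into_rtrancl)
  then have "tau w \<in> tau ` {w\<in>V. conn E eps phi v w}" using w by auto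
  then have "Min (tau ` {w\<in>V. conn E eps phi v w}) \<le> tau w"
    using assms(1) by (intro Min_le) simp_all
  then show ?thesis using w(3) unfolding mu_def by linarith
qed

lemma gdist_path:
  assumes "finite_connected_graph V E" "p \<in> V" "w \<in> V"
  shows "(p, w) \<in> edge_rel E ^^ gdist E p w"
proof -
  have "(p, w) \<in> (edge_rel E)\<^sup>*" using assms unfolding finite_connected_graph_def by auto
  then obtain n where "(p, w) \<in> edge_rel E ^^ n" using rtrancl_power by blast
  then show ?thesis unfolding gdist_def by (rule LeastI)
qed

lemma gdist_step:
  assumes "finite_connected_graph V E" "p \<in> V" "w \<in> V" "E v p"
  shows "gdist E v w \<le> Suc (gdist E p w)"
proof -
  have "(v, p) \<in> edge_rel E" using assms(4) by (simp add: edge_rel_def)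
  then have "(v, w) \<in> edge_rel E ^^ Suc (gdist E p w)"
    by (rule relpow_Suc_I2[OF _ gdist_path[OF assms(1-3)]])
  then show ?thesis unfolding gdist_def by (rule Least_le)
qed

lemma ffun_nonneg:
  assumes "0 < eps" shows "0 \<le> ffun eps x"
proof -
  have "\<not> \<bar>x\<bar> \<ge> 1 \<Longrightarrow> 0 < 1 + x" "\<not> \<bar>x\<bar> \<ge> 1 \<Longrightarrow> 0 < 1 - x" by linarith+
  then show ?thesis using assms unfolding ffun_def
    by (auto intro: divide_nonneg_pos)
qed

lemma ffun_one:
  assumes "0 < eps" "\<bar>x\<bar> < 1 - eps" shows "ffun eps x = 1"
  using assms unfolding ffun_def by auto

lemma mfun_ge:
  assumes "0 < eps" shows "mfun tau eps v h t h' \<ge> t"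
proof (cases "tau v \<ge> t")
  case True
  have "0 \<le> min (tau v - t) (eps / 2) * ffun eps (h' - h)"
    using True assms ffun_nonneg[OF assms] by simp
  then show ?thesis using True unfolding mfun_def by simp
qed (simp add: mfun_def)

lemma main_inv:
  assumes G: "finite_connected_graph V E"
    and eps: "0 < eps"
    and tot: "total_order_on V le"
    and key: "\<forall>v\<in>V. \<forall>w\<in>V. gdist E v w \<le> Mfun V E eps phi + 1 \<longrightarrow> tau v - tau w \<le> eps / 2"
  shows "k \<le> card V \<Longrightarrow> (case addalg V E le tau eps phi k of (Ps, tk, ss) \<Rightarrow>
      length Ps = k \<and> length ss = k \<and> distinct Ps \<and> set Ps \<subseteq> V
      \<and> (\<forall>v\<in>V. \<forall>h. tk v h \<le> tau v)
      \<and> (\<forall>v\<in>V. mu V E eps phi tau v \<le> tk v (phi v))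
      \<and> (\<forall>i<k. mu V E eps phi tau (Ps!i) \<le> ss!i \<and> ss!i \<le> tau (Ps!i)))"
proof (induction k)
  case 0
  have "finite V" using G unfolding finite_connected_graph_def by auto
  then show ?case using mu_props(1) by auto
next
  case (Suc k)
  have finV: "finite V" using G unfolding finite_connected_graph_def by auto
  obtain Ps tk ss where eq: "addalg V E le tau eps phi k = (Ps, tk, ss)"
    by (cases "addalg V E le tau eps phi k") auto
  from Suc eq have IH: "length Ps = k" "length ss = k" "distinct Ps" "set Ps \<subseteq> V"
      "\<forall>v\<in>V. \<forall>h. tk v h \<le> tau v" "\<forall>v\<in>V. mu V E eps phi tau v \<le> tk v (phi v)"
      "\<forall>i<k. mu V E eps phi tau (Ps!i) \<le> ss!i \<and> ss!i \<le> tau (Ps!i)"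
    by auto
  define p where "p = argsel le (V - set Ps) (\<lambda>v. tk v (phi v))"
  define s where "s = tk p (phi p)"
  have "card (set Ps) = k" using IH distinct_card by metis
  have "V - set Ps \<noteq> {}"
  proof
    assume "V - set Ps = {}"
    then have "V \<subseteq> set Ps" by blast
    then have "card V \<le> card (set Ps)" by (rule card_mono[OF finite_set])
    then show False using \<open>card (set Ps) = k\<close> Suc.prems by linarith
  qed
  then have pin: "p \<in> V - set Ps" unfolding p_def
    using argsel_in[OF tot] finV by auto
  have sle: "s \<le> tau p" using IH(5) pin unfolding s_def by auto
  have sge: "mu V E eps phi tau p \<le> s" using IH(6) pin unfolding s_def by auto
  define tk' where "tk' = (\<lambda>v h. if v \<in> set (Ps @ [p]) \<or> \<not> E v p then tk v h
                   else min (tk v h) (mfun tau eps v (phi p) s h))"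
  have eq2: "addalg V E le tau eps phi (Suc k) = (Ps @ [p], tk', ss @ [s])"
    using eq unfolding p_def s_def tk'_def by (simp add: Let_def)
  have A: "\<forall>v\<in>V. \<forall>h. tk' v h \<le> tau v" using IH(5) unfolding tk'_def by (auto simp: min.coboundedI1)
  have mge: "mu V E eps phi tau v \<le> mfun tau eps v (phi p) s (phi v)" if "v \<in> V" "E v p" for v
  proof -
  have mg: "s \<le> mfun tau eps v (phi p) s (phi v)" by (rule mfun_ge[OF eps])
  show ?thesis
  proof (cases "tau v < s")
    case True
    then show ?thesis using mu_props(1)[OF finV that(1), of E eps phi tau] mg
      by linarith
  next
    case False
    show ?thesis
    proof (cases "\<bar>phi v - phi p\<bar> \<ge> 1 - eps")
      case True
      then have "(v, p) \<in> steep_edges E eps phi" using that by (simp add: steep_edges_def)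
      then have "mu V E eps phi tau v \<le> mu V E eps phi tau p"
        using pin by (intro mu_steep[OF finV that(1)]) auto
      then show ?thesis using sge mg by linarith
    next
      case nst: False
      obtain w where w: "w \<in> V" "conn E eps phi p w" "mu V E eps phi tau p = tau w"
        using mu_props(2)[OF finV] pin by blast
      have "gdist E p w \<in> {gdist E v w | v w. v \<in> V \<and> w \<in> V \<and> conn E eps phi v w}"
        using w pin by blast
      moreover have "finite {gdist E v w | v w. v \<in> V \<and> w \<in> V \<and> conn E eps phi v w}"
      proof -
        have "{gdist E v w | v w. v \<in> V \<and> w \<in> V \<and> conn E eps phi v w} \<subseteq> (\<lambda>(v,w). gdist E v w) ` (V \<times> V)"
          by auto
        then show ?thesis using finV finite_subset by blast
      qed
      ultimately have "gdist E p w \<le> Mfun V E eps phi" unfolding Mfun_def by (simp add: Max_ge)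
      moreover have "gdist E v w \<le> Suc (gdist E p w)" using gdist_step[OF G _ w(1) that(2)] pin by auto
      ultimately have "tau v - tau w \<le> eps / 2" using key that w by auto
      then have "tau v - s \<le> eps / 2" using sge w by linarith
      moreover have "ffun eps (phi v - phi p) = 1" using nst by (intro ffun_one[OF eps]) auto
      ultimately have "mfun tau eps v (phi p) s (phi v) = tau v" using False
        unfolding mfun_def by auto
      then show ?thesis using mu_props(1)[OF finV that(1), of E eps phi tau] by auto
    qed
  qed
  qed
  have B: "\<forall>v\<in>V. mu V E eps phi tau v \<le> tk' v (phi v)"
    using IH(6) mge unfolding tk'_def by auto
  have C: "\<forall>i<Suc k. mu V E eps phi tau ((Ps@[p])!i) \<le> (ss@[s])!i \<and> (ss@[s])!i \<le> tau ((Ps@[p])!i)"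
  proof (intro allI impI)
    fix i assume "i < Suc k"
    then consider "i < k" | "i = k" by linarith
    then show "mu V E eps phi tau ((Ps@[p])!i) \<le> (ss@[s])!i \<and> (ss@[s])!i \<le> tau ((Ps@[p])!i)"
      by cases (use IH sle sge in \<open>auto simp: nth_append\<close>)
  qed
  show ?case unfolding eq2 using IH pin A B C by auto
qed

theorem proposition2p3:
  fixes V :: "'a set" and E le :: "'a \<Rightarrow> 'a \<Rightarrow> bool"
    and tau phi :: "'a \<Rightarrow> real" and eps :: real
  assumes "finite_connected_graph V E"
    and "\<forall>v\<in>V. tau v \<ge> 0"
    and "0 < eps" and "eps \<le> 1/2"
    and "total_order_on V le"
    and "ereal (real (Mfun V E eps phi)) \<le> Lbound V E tau eps"
  shows "\<forall>v\<in>V.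
           tau v - tau' V E tau v (rfun V E eps phi v) \<le> Tplus V E le tau eps phi v - phi v
         \<and> Tplus V E le tau eps phi v - phi v \<le> tau v
         \<and> tau v - eps / 2 \<le> Tplus V E le tau eps phi v - phi v
         \<and> Tplus V E le tau eps phi v - phi v = phi v - Tminus V E le tau eps phi v"
proof -
  note G = assms(1)
  have finV: "finite V" using G unfolding finite_connected_graph_def by auto
  define M where "M = Mfun V E eps phi"
  define K where "K = {k::nat. \<forall>v\<in>V. tau' V E tau v k \<le> eps / 2}"
  have "\<exists>k\<in>K. M + 1 \<le> k"
  proof (rule ccontr)
    assume "\<not> ?thesis"
    then have "\<forall>k\<in>K. k \<le> M" by auto
    then have "(SUP k\<in>K. ereal (real k)) \<le> ereal (real M)" by (intro SUP_least) auto
    then have "(SUP k\<in>K. ereal (real k)) - 1 \<le> ereal (real M) - 1"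
      by (simp add: ereal_minus_mono)
    moreover have "ereal (real M) - 1 = ereal (real M - 1)" by (simp add: one_ereal_def)
    ultimately have "Lbound V E tau eps \<le> ereal (real M - 1)" unfolding Lbound_def K_def by simp
    with assms(6) have "ereal (real M) \<le> ereal (real M - 1)" unfolding M_def by (rule order_trans)
    then show False by simp
  qed
  then obtain k0 where k0: "k0 \<in> K" "M + 1 \<le> k0" by blast
  have key: "\<forall>v\<in>V. \<forall>w\<in>V. gdist E v w \<le> Mfun V E eps phi + 1 \<longrightarrow> tau v - tau w \<le> eps / 2"
  proof (intro ballI impI)
    fix v w assume vw: "v \<in> V" "w \<in> V" "gdist E v w \<le> Mfun V E eps phi + 1"
    have "tau v - tau w \<in> {tau v - tau w | w. w \<in> V \<and> gdist E v w \<le> k0}"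
      using vw k0 unfolding M_def by auto
    moreover have "finite {tau v - tau w | w. w \<in> V \<and> gdist E v w \<le> k0}"
      using finV by simp
    ultimately have "tau v - tau w \<le> tau' V E tau v k0" unfolding tau'_def by (simp add: Max_ge)
    also have "\<dots> \<le> eps / 2" using k0 vw unfolding K_def by auto
    finally show "tau v - tau w \<le> eps / 2" .
  qed
  obtain Ps tk ss where eq: "addalg V E le tau eps phi (card V) = (Ps, tk, ss)"
    by (cases "addalg V E le tau eps phi (card V)") auto
  from main_inv[OF G assms(3,5) key, of "card V"] eq
  have I: "length Ps = card V" "length ss = card V" "distinct Ps" "set Ps \<subseteq> V"
      "\<forall>i<card V. mu V E eps phi tau (Ps!i) \<le> ss!i \<and> ss!i \<le> tau (Ps!i)"
    by auto
  have setPs: "set Ps = V" using I finV by (metis card_subset_eq distinct_card)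
  show ?thesis
  proof
    fix v assume v: "v \<in> V"
    then obtain i where i: "i < card V" "Ps ! i = v" using setPs I(1) by (metis in_set_conv_nth)
    have Tp: "Tplus V E le tau eps phi v - phi v = ss ! i"
      unfolding Tplus_def eq using map_of_zip_nth[of Ps ss i] I i by auto
    have b: "mu V E eps phi tau v \<le> ss!i" "ss!i \<le> tau v" using I(5) i by auto
    obtain w where w: "w \<in> V" "conn E eps phi v w" "mu V E eps phi tau v = tau w"
      using mu_props(2)[OF finV v] by blast
    have "gdist E v w \<le> rfun V E eps phi v" unfolding rfun_def
      using w finV by (intro Max_ge) auto
    then have "tau v - tau w \<le> tau' V E tau v (rfun V E eps phi v)" unfolding tau'_def
      using w finV by (intro Max_ge) auto
    moreover have "gdist E v w \<le> Mfun V E eps phi" unfolding Mfun_def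
    proof (rule Max_ge)
      have "{gdist E v w | v w. v \<in> V \<and> w \<in> V \<and> conn E eps phi v w} \<subseteq> (\<lambda>(v,w). gdist E v w) ` (V \<times> V)"
        by auto
      then show "finite {gdist E v w | v w. v \<in> V \<and> w \<in> V \<and> conn E eps phi v w}"
        using finV finite_subset by blast
    qed (use v w in auto)
    then have "tau v - tau w \<le> eps / 2" using key v w by auto
    ultimately show "tau v - tau' V E tau v (rfun V E eps phi v) \<le> Tplus V E le tau eps phi v - phi v
         \<and> Tplus V E le tau eps phi v - phi v \<le> tau v
         \<and> tau v - eps / 2 \<le> Tplus V E le tau eps phi v - phi v
         \<and> Tplus V E le tau eps phi v - phi v = phi v - Tminus V E le tau eps phi v"
      using Tp b w unfolding Tminus_def by auto
  qed
qed

end
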